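(* Let $(\lambda_1,v)$ be a real eigenpair of the $n\times n$ real matrix $A=[a_{ij}]$, with every component of $v$ nonzero. Let $S=\mathrm{diag}(v)$ and $B=[b_{ij}]=S^{-1}AS$. If $\lambda$ is an eigenvalue of $A$ different from $\lambda_1$, then $$|\lambda|\le\max_{1\le i\le n}\{|a_{ii}|+\hat r_i(B)\}.$$ Moreover: (1) If $n$ is even and $F=[f_{ij}]=[b_{ij}-\beta_j]$, where $\beta_j$ is the $(n/2)$-th largest element among $b_{1j},\dots,b_{j-1,j},b_{j+1,j},\dots,b_{nj}$, then $|\lambda|\le\max_{1\le i\le n}\{|f_{ii}|+\hat r_i(F)\}$. (2) If $n$ is odd with $n\ge 3$, and $F=[f_{ij}]=[b_{ij}+\beta_j]$, $G=[g_{ij}]=[b_{ij}+\gamma_j]$, where $\beta_j$ and $\gamma_j$ are, respectively, the negatives of the $\frac{n-1}{2}$-th and the $\frac{n+1}{2}$-th largest numbers among $b_{1j},\dots,b_{j-1,j},b_{j+1,j},\dots,b_{nj}$, then $$|\lambda|\le\min\Big\{\max_{1\le i\le n}\{|f_{ii}|+\hat r_i(F)\},\ \max_{1\le i\le n}\{|g_{ii}|+\hat r_i(G)\}\Big\}.$$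
   Context: For a real $n\times n$ matrix $M=[m_{ij}]$ and index $i$, let $y_1\ge\dots\ge y_n$ be the non-increasing rearrangement of the $i$-th column of $M$ with its diagonal entry replaced by $0$, i.e. of $m_{1i},\dots,m_{i-1,i},0,m_{i+1,i},\dots,m_{ni}$. Define $\hat r_i(M)=\sum_{t=1}^{(n-1)/2}y_t-\sum_{t=(n+3)/2}^{n}y_t$ if $n$ is odd and $\hat r_i(M)=\sum_{t=1}^{n/2}y_t-\sum_{t=n/2+1}^{n}y_t$ if $n$ is even (the radius of the Gershgorin disc of the second type obtained from the $i$-th column of $M$). "The $t$-th largest element" of a list refers to the $t$-th entry of the list sorted in non-increasing order (with repetitions). *)

theory Defs
  imports Complex_Main "Jordan_Normal_Form.Char_Poly"
begin

(* Indices are 0-based: i, j range over {0..<n}. *)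

definition col_sorted_desc :: "real mat \<Rightarrow> nat \<Rightarrow> real list" where
  "col_sorted_desc M i =
     rev (sort (map (\<lambda>j. if j = i then 0 else M $$ (j, i)) [0..<dim_row M]))"

definition rhat :: "real mat \<Rightarrow> nat \<Rightarrow> real" where
  "rhat M i = (let n = dim_row M; ys = col_sorted_desc M i in
     if even n then sum_list (take (n div 2) ys) - sum_list (drop (n div 2) ys)
     else sum_list (take ((n - 1) div 2) ys) - sum_list (drop ((n + 1) div 2) ys))"

definition kth_largest :: "nat \<Rightarrow> real list \<Rightarrow> real" where
  "kth_largest k xs = rev (sort xs) ! (k - 1)"

definition offdiag_col :: "real mat \<Rightarrow> nat \<Rightarrow> real list" where
  "offdiag_col M j = map (\<lambda>i. M $$ (i, j)) (filter (\<lambda>i. i \<noteq> j) [0..<dim_row M])"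

definition gersh_bound :: "real mat \<Rightarrow> real" where
  "gersh_bound M = Max ((\<lambda>i. \<bar>M $$ (i, i)\<bar> + rhat M i) ` {..<dim_row M})"

end

theory Submission
  imports Defs
begin

lemma sum_abs_sorted:
  fixes ys :: "real list"
  assumes srt: "sorted_wrt (\<ge>) ys" and k: "k < length ys"
  shows "sum_list (map (\<lambda>x. \<bar>x - ys ! k\<bar>) ys)
    = sum_list (take k ys) - sum_list (drop k ys) + (real (length ys) - 2 * real k) * ys ! k"
proof -
  let ?t = "ys ! k"
  have ge: "x \<ge> ?t" if "x \<in> set (take k ys)" for x
  proof -
    from that obtain j where j: "j < k" "x = ys ! j" using k
      by (auto simp: in_set_conv_nth)
    then show ?thesis using sorted_wrt_nth_less[OF srt j(1) k] by simp
  qed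
  have le: "x \<le> ?t" if "x \<in> set (drop k ys)" for x
  proof -
    from that obtain j where j: "j < length ys - k" "x = ys ! (k + j)" using k
      by (auto simp: in_set_conv_nth)
    show ?thesis
    proof (cases "j = 0")
      case True then show ?thesis using j by simp
    next
      case False
      then show ?thesis using sorted_wrt_nth_less[OF srt, of k "k+j"] j by simp
    qed
  qed
  have 1: "map (\<lambda>x. \<bar>x - ?t\<bar>) (take k ys) = map (\<lambda>x. x - ?t) (take k ys)"
    using ge by auto
  have 2: "map (\<lambda>x. \<bar>x - ?t\<bar>) (drop k ys) = map (\<lambda>x. ?t - x) (drop k ys)"
    using le by auto
  have "sum_list (map (\<lambda>x. \<bar>x - ?t\<bar>) ys) = sum_list (map (\<lambda>x. \<bar>x - ?t\<bar>) (take k ys))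
     + sum_list (map (\<lambda>x. \<bar>x - ?t\<bar>) (drop k ys))"
    by (metis append_take_drop_id map_append sum_list_append)
  also have "\<dots> = (sum_list (take k ys) - real k * ?t) + (real (length ys - k) * ?t - sum_list (drop k ys))"
    unfolding 1 2 using k by (simp add: sum_list_subtractf sum_list_triv)
  finally show ?thesis using k by (simp add: algebra_simps of_nat_diff)
qed

lemma rhat_abs:
  assumes "dim_row M = n" "i < n"
  shows "rhat M i = (\<Sum>j<n. \<bar>(if j = i then 0 else M $$ (j, i)) - col_sorted_desc M i ! (n div 2)\<bar>)"
proof -
  define zs where "zs = map (\<lambda>j. if j = i then 0 else M $$ (j, i)) [0..<n]"
  define ys where "ys = col_sorted_desc M i"
  have ys: "ys = rev (sort zs)" unfolding ys_def zs_def col_sorted_desc_def using assms by simp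
  have len: "length ys = n" using ys zs_def by simp
  have srt: "sorted_wrt (\<ge>) ys" unfolding ys sorted_wrt_rev
    by (metis sorted_sort sorted_wrt_mono_rel sorted_wrt_rev) 
  have ms: "mset ys = mset zs" using ys by simp
  let ?t = "ys ! (n div 2)"
  have "(\<Sum>j<n. \<bar>(if j = i then 0 else M $$ (j, i)) - ?t\<bar>) = sum_list (map (\<lambda>x. \<bar>x - ?t\<bar>) zs)"
    unfolding zs_def by (simp add: sum_list_sum_nth atLeast0LessThan)
  also have "\<dots> = sum_list (map (\<lambda>x. \<bar>x - ?t\<bar>) ys)"
    by (metis ms mset_map sum_mset_sum_list)
  also have "\<dots> = sum_list (take (n div 2) ys) - sum_list (drop (n div 2) ys) + (real n - 2 * real (n div 2)) * ?t"
    using sum_abs_sorted[OF srt, of "n div 2"] len assms by simp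
  finally have E: "(\<Sum>j<n. \<bar>(if j = i then 0 else M $$ (j, i)) - ?t\<bar>) = \<dots>" .
  show ?thesis
  proof (cases "even n")
    case True
    then have "real n - 2 * real (n div 2) = 0" by (metis dvd_mult_div_cancel of_nat_mult of_nat_numeral diff_self)
    then show ?thesis using E True unfolding rhat_def ys_def[symmetric] assms(1) by simp
  next
    case False
    then have nn: "n = 2 * (n div 2) + 1" by presburger
    have r: "real n = 2 * real (n div 2) + 1" by (subst nn) simp
    have n2: "real n - 2 * real (n div 2) = 1" "(n - 1) div 2 = n div 2" "(n+1) div 2 = Suc (n div 2)"
      using r nn by simp_all
    have "drop (n div 2) ys = ?t # drop (Suc (n div 2)) ys" using len assms
      by (simp add: Cons_nth_drop_Suc)
    then show ?thesis using E False n2 unfolding rhat_def ys_def[symmetric] assms(1) by simp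
  qed
qed

lemma gersh_core:
  fixes M :: "real mat" and y :: "nat \<Rightarrow> complex" and lam :: complex
  assumes dim: "dim_row M = n" and sum0: "(\<Sum>j<n. y j) = 0" and i: "i < n"
    and ymax: "\<forall>j<n. cmod (y j) \<le> cmod (y i)" and yi: "y i \<noteq> 0"
    and eq: "(\<Sum>j<n. y j * of_real (M $$ (j, i))) = lam * y i"
  shows "cmod lam \<le> \<bar>M $$ (i, i)\<bar> + rhat M i"
proof -
  define z where "z j = (if j = i then 0 else M $$ (j, i))" for j
  define t where "t = col_sorted_desc M i ! (n div 2)"
  have R: "rhat M i = (\<Sum>j<n. \<bar>z j - t\<bar>)" unfolding z_def t_def by (rule rhat_abs[OF dim i])
  have "(\<Sum>j<n. y j * of_real (M $$ (j, i))) = y i * of_real (M $$ (i, i)) + (\<Sum>j\<in>{..<n}-{i}. y j * of_real (M $$ (j, i)))"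
    using i by (subst sum.remove[of _ i]) auto
  also have "(\<Sum>j\<in>{..<n}-{i}. y j * of_real (M $$ (j, i))) = (\<Sum>j<n. y j * of_real (z j))"
    using i by (subst (2) sum.remove[of _ i]) (auto simp: z_def intro!: sum.cong)
  also have "(\<Sum>j<n. y j * of_real (z j)) = (\<Sum>j<n. y j * of_real (z j - t))"
  proof -
    have "(\<Sum>j<n. y j * of_real (z j - t)) = (\<Sum>j<n. y j * of_real (z j)) - (\<Sum>j<n. y j) * of_real t"
      by (simp add: algebra_simps sum_subtractf sum_distrib_right sum_distrib_left)
    then show ?thesis using sum0 by simp
  qed
  finally have E: "lam * y i = y i * of_real (M $$ (i, i)) + (\<Sum>j<n. y j * of_real (z j - t))"
    using eq by simp
  have "cmod (\<Sum>j<n. y j * of_real (z j - t)) \<le> (\<Sum>j<n. cmod (y j * of_real (z j - t)))"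
    by (rule norm_sum)
  also have "\<dots> \<le> (\<Sum>j<n. cmod (y i) * \<bar>z j - t\<bar>)"
    by (rule sum_mono) (use ymax in \<open>auto simp: norm_mult of_real_diff[symmetric] simp del: of_real_diff intro!: mult_right_mono\<close>)
  also have "\<dots> = cmod (y i) * rhat M i" by (simp add: R sum_distrib_left)
  finally have S: "cmod (\<Sum>j<n. y j * of_real (z j - t)) \<le> cmod (y i) * rhat M i" .
  have "cmod lam * cmod (y i) = cmod (lam * y i)" by (simp add: norm_mult)
  also have "\<dots> \<le> cmod (y i * of_real (M $$ (i, i))) + cmod (\<Sum>j<n. y j * of_real (z j - t))"
    unfolding E by (rule norm_triangle_ineq)
  also have "\<dots> \<le> cmod (y i) * (\<bar>M $$ (i, i)\<bar> + rhat M i)"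
    using S by (simp add: norm_mult algebra_simps)
  finally have "cmod (y i) * cmod lam \<le> cmod (y i) * (\<bar>M $$ (i, i)\<bar> + rhat M i)" by (simp add: mult.commute)
  moreover have "cmod (y i) > 0" using yi by simp
  ultimately show ?thesis by (simp add: mult_le_cancel_left_pos)
qed

lemma gersh_bound_ge:
  fixes M :: "real mat" and y :: "nat \<Rightarrow> complex" and lam :: complex
  assumes dim: "dim_row M = n" and sum0: "(\<Sum>j<n. y j) = 0" and i: "i < n"
    and ymax: "\<forall>j<n. cmod (y j) \<le> cmod (y i)" and yi: "y i \<noteq> 0"
    and eq: "\<forall>k<n. (\<Sum>j<n. y j * of_real (M $$ (j, k))) = lam * y k"
  shows "cmod lam \<le> gersh_bound M"
proof -
  have "cmod lam \<le> \<bar>M $$ (i, i)\<bar> + rhat M i"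
    using gersh_core[OF dim sum0 i ymax yi] eq i by blast
  also have "\<dots> \<le> gersh_bound M" unfolding gersh_bound_def
    by (rule Max_ge) (use i dim in auto)
  finally show ?thesis .
qed

lemma shifted_eq:
  fixes B :: "real mat" and y :: "nat \<Rightarrow> complex" and c :: "nat \<Rightarrow> real"
  assumes sum0: "(\<Sum>j<n. y j) = 0" and k: "k < n"
    and eq: "(\<Sum>j<n. y j * of_real (B $$ (j, k))) = lam * y k"
  shows "(\<Sum>j<n. y j * of_real (mat n n (\<lambda>(i, j). B $$ (i, j) + c j) $$ (j, k))) = lam * y k"
proof -
  have "(\<Sum>j<n. y j * of_real (mat n n (\<lambda>(i, j). B $$ (i, j) + c j) $$ (j, k)))
     = (\<Sum>j<n. y j * of_real (B $$ (j, k))) + (\<Sum>j<n. y j) * of_real (c k)"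
    using k by (simp add: sum.distrib sum_distrib_right sum_distrib_left algebra_simps)
  then show ?thesis using sum0 eq by simp
qed

theorem theorem8:
  fixes A :: "real mat" and n :: nat and v :: "real vec" and lam1 :: real and lam :: complex
    and B :: "real mat"
  assumes A: "A \<in> carrier_mat n n"
    and eig1: "eigenvector A v lam1"
    and vnz: "\<forall>i<n. v $ i \<noteq> 0"
    and B_def: "B = mat n n (\<lambda>(i, j). (1 / v $ i) * A $$ (i, j) * v $ j)"
    and eig: "eigenvalue (map_mat complex_of_real A) lam"
    and ne: "lam \<noteq> complex_of_real lam1"
  shows "cmod lam \<le> Max ((\<lambda>i. \<bar>A $$ (i, i)\<bar> + rhat B i) ` {..<n})
    \<and> (even n \<longrightarrow>
           cmod lam \<le> gersh_bound
             (mat n n (\<lambda>(i, j). B $$ (i, j) - kth_largest (n div 2) (offdiag_col B j))))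
    \<and> (odd n \<and> n \<ge> 3 \<longrightarrow>
           cmod lam \<le> min
             (gersh_bound (mat n n (\<lambda>(i, j). B $$ (i, j)
                 + (- kth_largest ((n - 1) div 2) (offdiag_col B j)))))
             (gersh_bound (mat n n (\<lambda>(i, j). B $$ (i, j)
                 + (- kth_largest ((n + 1) div 2) (offdiag_col B j))))))"
proof -
  let ?Ac = "map_mat complex_of_real A"
  have Ac: "?Ac \<in> carrier_mat n n" using A by simp
  have AcT: "transpose_mat ?Ac \<in> carrier_mat n n" using Ac by simp
  have "eigenvalue (transpose_mat ?Ac) lam"
    using eig unfolding eigenvalue_root_char_poly[OF Ac] eigenvalue_root_char_poly[OF AcT]
    using char_poly_transpose_mat[OF Ac] by simp
  then obtain x where x: "eigenvector (transpose_mat ?Ac) x lam" unfolding eigenvalue_def by blast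
  then have xc: "x \<in> carrier_vec n" and xnz: "x \<noteq> 0\<^sub>v n"
    and xeq: "transpose_mat ?Ac *\<^sub>v x = lam \<cdot>\<^sub>v x"
    unfolding eigenvector_def using A by auto
  have vc: "v \<in> carrier_vec n" and veq: "A *\<^sub>v v = lam1 \<cdot>\<^sub>v v"
    using eig1 A unfolding eigenvector_def by auto
  have xe: "(\<Sum>k<n. of_real (A $$ (k, j)) * x $ k) = lam * x $ j" if "j < n" for j
  proof -
    have "(transpose_mat ?Ac *\<^sub>v x) $ j = (lam \<cdot>\<^sub>v x) $ j" using xeq by simp
    then show ?thesis using that A xc by (simp add: scalar_prod_def atLeast0LessThan)
  qed
  have ve: "(\<Sum>k<n. A $$ (j, k) * v $ k) = lam1 * v $ j" if "j < n" for j
  proof -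
    have "(A *\<^sub>v v) $ j = (lam1 \<cdot>\<^sub>v v) $ j" using veq by simp
    then show ?thesis using that A vc by (simp add: scalar_prod_def atLeast0LessThan)
  qed
  define y where "y j = x $ j * of_real (v $ j)" for j
  have sum0: "(\<Sum>j<n. y j) = 0"
  proof -
    have "lam * (\<Sum>j<n. y j) = (\<Sum>j<n. (lam * x $ j) * of_real (v $ j))"
      by (simp add: y_def sum_distrib_left mult.assoc)
    also have "\<dots> = (\<Sum>j<n. (\<Sum>k<n. of_real (A $$ (k, j)) * x $ k) * of_real (v $ j))"
      by (rule sum.cong) (simp_all add: xe)
    also have "\<dots> = (\<Sum>j<n. \<Sum>k<n. x $ k * of_real (A $$ (k, j) * v $ j))"
      by (simp add: sum_distrib_right sum_distrib_left mult_ac)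
    also have "\<dots> = (\<Sum>k<n. \<Sum>j<n. x $ k * of_real (A $$ (k, j) * v $ j))"
      by (rule sum.swap)
    also have "\<dots> = (\<Sum>k<n. x $ k * of_real (\<Sum>j<n. A $$ (k, j) * v $ j))"
      by (simp only: sum_distrib_left of_real_sum)
    also have "\<dots> = of_real lam1 * (\<Sum>j<n. y j)"
      unfolding sum_distrib_left by (rule sum.cong[OF refl], subst ve, simp, simp add: y_def mult_ac)
    finally have "(lam - of_real lam1) * (\<Sum>j<n. y j) = 0" by (simp add: algebra_simps)
    then show ?thesis using ne by simp
  qed
  have Beq: "(\<Sum>j<n. y j * of_real (B $$ (j, k))) = lam * y k" if k: "k < n" for k
  proof -
    have "(\<Sum>j<n. y j * of_real (B $$ (j, k))) = (\<Sum>j<n. of_real (A $$ (j, k)) * x $ j) * of_real (v $ k)"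
      unfolding sum_distrib_right by (rule sum.cong[OF refl]) (use k vnz in \<open>simp add: y_def B_def\<close>)
    also have "\<dots> = lam * y k" using xe[OF k] by (simp add: y_def)
    finally show ?thesis .
  qed
  have npos: "n > 0"
  proof (rule ccontr)
    assume "\<not> n > 0"
    then have "x = 0\<^sub>v n" using xc by (auto intro!: eq_vecI)
    then show False using xnz by simp
  qed
  obtain j0 where j0: "j0 < n" "x $ j0 \<noteq> 0"
  proof (rule ccontr)
    assume "\<not> thesis"
    then have "\<forall>j<n. x $ j = 0" using that by blast
    then have "x = 0\<^sub>v n" using xc by (auto intro!: eq_vecI)
    then show False using xnz by simp
  qed
  define m where "m = Max ((\<lambda>j. cmod (y j)) ` {..<n})"
  have "m \<in> (\<lambda>j. cmod (y j)) ` {..<n}" unfolding m_def using npos by (intro Max_in) auto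
  then obtain i where i: "i < n" and mi: "m = cmod (y i)" by auto
  have ymax: "\<forall>j<n. cmod (y j) \<le> cmod (y i)" unfolding mi[symmetric] m_def by auto
  have "y j0 \<noteq> 0" using j0 vnz by (simp add: y_def)
  then have "cmod (y j0) > 0" by simp
  then have "cmod (y i) > 0" using ymax j0(1) by (meson less_le_trans)
  then have yi: "y i \<noteq> 0" by auto
  have dB: "dim_row B = n" using B_def by simp
  have c1: "cmod lam \<le> Max ((\<lambda>i. \<bar>A $$ (i, i)\<bar> + rhat B i) ` {..<n})"
  proof -
    have "cmod lam \<le> \<bar>B $$ (i, i)\<bar> + rhat B i"
      using gersh_core[OF dB sum0 i ymax yi] Beq i by blast
    also have "\<dots> = \<bar>A $$ (i, i)\<bar> + rhat B i" using i vnz by (simp add: B_def)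
    also have "\<dots> \<le> Max ((\<lambda>i. \<bar>A $$ (i, i)\<bar> + rhat B i) ` {..<n})"
      by (rule Max_ge) (use i in auto)
    finally show ?thesis .
  qed
  have gen: "cmod lam \<le> gersh_bound (mat n n (\<lambda>(i, j). B $$ (i, j) + c j))" for c
    by (rule gersh_bound_ge[OF _ sum0 i ymax yi]) (use shifted_eq[OF sum0 _ Beq] in auto)
  have c2: "cmod lam \<le> gersh_bound (mat n n (\<lambda>(i, j). B $$ (i, j) - kth_largest (n div 2) (offdiag_col B j)))"
    using gen[of "\<lambda>j. - kth_largest (n div 2) (offdiag_col B j)"] by simp
  have c3: "cmod lam \<le> gersh_bound (mat n n (\<lambda>(i, j). B $$ (i, j) + (- kth_largest ((n - 1) div 2) (offdiag_col B j))))"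
    by (rule gen)
  have c4: "cmod lam \<le> gersh_bound (mat n n (\<lambda>(i, j). B $$ (i, j) + (- kth_largest ((n + 1) div 2) (offdiag_col B j))))"
    by (rule gen)
  show ?thesis
    by (intro conjI impI, rule c1, rule c2, rule min.boundedI[OF c3 c4])
qed

end
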